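(* A Hausdorff topological space $\langle X,\tau\rangle$ is a continuous open image of the Sorgenfrey line $\mathbb{S}$ (i.e. there is a continuous open surjection $\mathbb{S}\to\langle X,\tau\rangle$) if and only if there exists a Sorgenfrey base for $\langle X,\tau\rangle$.
   Context: The Sorgenfrey line $\mathbb{S}$ is $\mathbb{R}$ with the topology generated by $\{[a,b):a,b\in\mathbb{R}\}$. Notation: $\omega=\{0,1,2,\dots\}$, each $n\in\omega$ is identified with $\{0,\dots,n-1\}$; ${}^{<\omega}\omega$ is the set of finite sequences of naturals, ${}^\omega\omega$ the set of infinite ones; $\mathrm{lh}(s)$ is the length; $s\sqsubseteq t$ means $s=t\upharpoonright \mathrm{lh}(s)$, $s\sqsubset t$ means $s\sqsubseteq t$, $s\neq t$; $a^\frown k$ is $a$ extended by $k$. For $a,b\in{}^{<\omega}\omega\cup{}^\omega\omega$: $a\triangleleft b$ iff there is $n$ (in the domains of both) with $a\upharpoonright n=b\upharpoonright n$ and $a(n)<b(n)$; $a\trianglelefteq b$ iff $a\triangleleft b$ or $a=b$. A Souslin scheme on a set $X$ is a family $\mathbf V=\langle V_a\rangle_{a\in{}^{<\omega}\omega}$ of subsets of $X$. For $p\in{}^\omega\omega$, $\mathrm{fruit}(\mathbf V,p)=\bigcap_n V_{p\upharpoonright n}$. $\mathbf V$ is covering if $V_{\langle\rangle}=X$ and $V_a=\bigcup_n V_{a^\frown n}$ for all $a$; complete if $\mathrm{fruit}(\mathbf V,q)\ne\emptyset$ for all $q\in{}^\omega\omega$; open (on a space $\langle X,\tau\rangle$)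 if all $V_a\in\tau$. For $x\in X$, $q\in{}^\omega\omega$ is a branch of $x$ if $x\in\mathrm{fruit}(\mathbf V,q)$; $\mathrm{branches}(\mathbf V,x)$ is the set of branches of $x$. For $q\in{}^\omega\omega$, $n\in\omega$: $\mathrm{rsequences}(q,n)=\{p\in{}^\omega\omega: q\triangleleft p,\ q\upharpoonright n=p\upharpoonright n\}$ and $\mathrm{cut}(\mathbf V,q,n)=\bigcup\{\mathrm{fruit}(\mathbf V,p):p\in\mathrm{rsequences}(q,n)\}$. A branch $q$ of $x$ is a $\tau$-base branch of $x$ if $\{\mathrm{cut}(\mathbf V,q,m)\cup\{x\}:m\in\omega\}$ is an open neighborhood base at $x$ in $\langle X,\tau\rangle$; $\mathrm{BB}(\mathbf V,x,\tau)$ denotes the set of $\tau$-base branches of $x$. A Sorgenfrey base for a Hausdorff space $\langle X,\tau\rangle$ is an open complete covering Souslin scheme $\mathbf V$ on $\langle X,\tau\rangle$ such that (S1) for every $x\in X$, every $q\in\mathrm{branches}(\mathbf V,x)$ and every $n\in\omega$ there is $t\in\mathrm{BB}(\mathbf V,x,\tau)$ with $t\upharpoonright n=q\upharpoonright n$; and (S2) for every $q\in{}^\omega\omega$ there is $z\in X$ with $q\in\mathrm{BB}(\mathbf V,z,\tau)$. *)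

theory Defs
  imports "HOL-Analysis.Analysis"
begin

definition sorgenfrey :: "real topology" where
  "sorgenfrey = topology_generated_by {{a..<b} | a b. True}"

definition restr :: "(nat \<Rightarrow> nat) \<Rightarrow> nat \<Rightarrow> nat list" where
  "restr p n = map p [0..<n]"

definition seq_less :: "(nat \<Rightarrow> nat) \<Rightarrow> (nat \<Rightarrow> nat) \<Rightarrow> bool" where
  "seq_less q p \<longleftrightarrow> (\<exists>n. restr q n = restr p n \<and> q n < p n)"

definition fruit :: "(nat list \<Rightarrow> 'a set) \<Rightarrow> (nat \<Rightarrow> nat) \<Rightarrow> 'a set" where
  "fruit V p = (\<Inter>n. V (restr p n))"

definition covering_scheme :: "'a set \<Rightarrow> (nat list \<Rightarrow> 'a set) \<Rightarrow> bool" where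
  "covering_scheme X V \<longleftrightarrow> V [] = X \<and> (\<forall>a. V a = (\<Union>n. V (a @ [n])))"

definition complete_scheme :: "(nat list \<Rightarrow> 'a set) \<Rightarrow> bool" where
  "complete_scheme V \<longleftrightarrow> (\<forall>q. fruit V q \<noteq> {})"

definition open_scheme :: "'a topology \<Rightarrow> (nat list \<Rightarrow> 'a set) \<Rightarrow> bool" where
  "open_scheme T V \<longleftrightarrow> (\<forall>a. openin T (V a))"

definition branches :: "(nat list \<Rightarrow> 'a set) \<Rightarrow> 'a \<Rightarrow> (nat \<Rightarrow> nat) set" where
  "branches V x = {q. x \<in> fruit V q}"

definition rsequences :: "(nat \<Rightarrow> nat) \<Rightarrow> nat \<Rightarrow> (nat \<Rightarrow> nat) set" where
  "rsequences q n = {p. seq_less q p \<and> restr q n = restr p n}"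

definition cut :: "(nat list \<Rightarrow> 'a set) \<Rightarrow> (nat \<Rightarrow> nat) \<Rightarrow> nat \<Rightarrow> 'a set" where
  "cut V q n = (\<Union>p\<in>rsequences q n. fruit V p)"

definition open_nbhd_base :: "'a topology \<Rightarrow> 'a \<Rightarrow> 'a set set \<Rightarrow> bool" where
  "open_nbhd_base T x \<B> \<longleftrightarrow>
     (\<forall>B\<in>\<B>. openin T B \<and> x \<in> B) \<and>
     (\<forall>U. openin T U \<and> x \<in> U \<longrightarrow> (\<exists>B\<in>\<B>. B \<subseteq> U))"

definition BB :: "(nat list \<Rightarrow> 'a set) \<Rightarrow> 'a \<Rightarrow> 'a topology \<Rightarrow> (nat \<Rightarrow> nat) set" where
  "BB V x T = {q \<in> branches V x. open_nbhd_base T x {cut V q m \<union> {x} | m. True}}"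

definition sorgenfrey_base :: "'a topology \<Rightarrow> (nat list \<Rightarrow> 'a set) \<Rightarrow> bool" where
  "sorgenfrey_base T V \<longleftrightarrow>
     open_scheme T V \<and> complete_scheme V \<and> covering_scheme (topspace T) V \<and>
     (\<forall>x\<in>topspace T. \<forall>q\<in>branches V x. \<forall>n. \<exists>t\<in>BB V x T. restr t n = restr q n) \<and>
     (\<forall>q. \<exists>z\<in>topspace T. q \<in> BB V z T)"

end

theory Submission
  imports Defs
begin


lemma sorg_open_iff:
  "openin sorgenfrey W \<longleftrightarrow> (\<forall>u\<in>W. \<exists>e>0. {u..<u+e} \<subseteq> W)"
proof
  assume "openin sorgenfrey W"
  hence "generate_topology_on {{a..<b} | a b. True} W"
    unfolding sorgenfrey_def by (rule openin_topology_generated_by)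
  thus "\<forall>u\<in>W. \<exists>e>0. {u..<u+e} \<subseteq> W"
  proof (induction rule: generate_topology_on.induct)
    case Empty then show ?case by simp
  next
    case (Int a b)
    show ?case
    proof
      fix u assume "u \<in> a \<inter> b"
      then obtain e1 e2 where "e1>0" "{u..<u+e1} \<subseteq> a" "e2>0" "{u..<u+e2} \<subseteq> b"
        using Int.IH by blast
      then show "\<exists>e>0. {u..<u+e} \<subseteq> a \<inter> b"
        by (intro exI[of _ "min e1 e2"]) (auto simp: subset_iff)
    qed
  next
    case (UN K)
    show ?case
    proof
      fix u assume "u \<in> \<Union>K"
      then obtain k where k: "k\<in>K" "u\<in>k" by blast
      then obtain e where "e>0" "{u..<u+e} \<subseteq> k" using UN.IH by blast
      then show "\<exists>e>0. {u..<u+e} \<subseteq> \<Union>K" using k by blast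
    qed
  next
    case (Basis s)
    then obtain a b where s: "s = {a..<b}" by blast
    show ?case
    proof
      fix u assume "u \<in> s"
      then show "\<exists>e>0. {u..<u+e} \<subseteq> s" using s
        by (intro exI[of _ "b-u"]) auto
    qed
  qed
next
  assume H: "\<forall>u\<in>W. \<exists>e>0. {u..<u+e} \<subseteq> W"
  define E where "E u = (SOME e. e>0 \<and> {u..<u+e} \<subseteq> W)" for u
  have E: "E u > 0 \<and> {u..<u+E u} \<subseteq> W" if "u\<in>W" for u
    using someI_ex[OF H[rule_format, OF that]] unfolding E_def by blast
  have "W = \<Union>((\<lambda>u. {u..<u+E u}) ` W)"
  proof
    show "W \<subseteq> \<Union>((\<lambda>u. {u..<u+E u}) ` W)"
    proof
      fix u assume u: "u \<in> W"
      then have "u \<in> {u..<u+E u}" using E[OF u] by simp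
      then show "u \<in> \<Union>((\<lambda>u. {u..<u+E u}) ` W)" using u by blast
    qed
    show "\<Union>((\<lambda>u. {u..<u+E u}) ` W) \<subseteq> W" using E by blast
  qed
  moreover have "generate_topology_on {{a..<b} | a b. True} (\<Union>((\<lambda>u. {u..<u+E u}) ` W))"
  proof (rule generate_topology_on.UN)
    fix k assume "k \<in> (\<lambda>u. {u..<u+E u}) ` W"
    then obtain u where "k = {u..<u+E u}" by blast
    then have "k \<in> {{a..<b} | a b. True}" by blast
    then show "generate_topology_on {{a..<b} | a b. True} k" by (rule generate_topology_on.Basis)
  qed
  ultimately have "generate_topology_on {{a..<b} | a b. True} W" by metis
  then show "openin sorgenfrey W"
    unfolding sorgenfrey_def by (rule iffD2[OF openin_topology_generated_by_iff])
qed

lemma topspace_sorg[simp]: "topspace sorgenfrey = UNIV"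
  unfolding sorgenfrey_def topology_generated_by_topspace
proof -
  have "x \<in> \<Union>{{a..<b} | a b. True}" for x :: real
  proof -
    have "x \<in> {x..<x+1}" by simp
    then show ?thesis by blast
  qed
  then show "\<Union>{{a..<b} | a b::real. True} = UNIV" by blast
qed

lemma restr_eq_iff: "restr p n = restr q n \<longleftrightarrow> (\<forall>i<n. p i = q i)"
  unfolding restr_def by (auto simp: list_eq_iff_nth_eq)

lemma restr_Suc: "restr p (Suc n) = restr p n @ [p n]"
  unfolding restr_def by simp

lemma restr_Suc0: "restr p (Suc n) = p 0 # restr (\<lambda>k. p (Suc k)) n"
  unfolding restr_def by (induction n) auto

lemma length_restr[simp]: "length (restr p n) = n"
  unfolding restr_def by simp

lemma restr_mono: "restr p n = restr q n \<Longrightarrow> m \<le> n \<Longrightarrow> restr p m = restr q m"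
  by (auto simp: restr_eq_iff)

lemma seq_less_iff: "seq_less q p \<longleftrightarrow> (\<exists>n. (\<forall>i<n. q i = p i) \<and> q n < p n)"
  unfolding seq_less_def restr_eq_iff by simp

lemma seq_less_irrefl: "\<not> seq_less p p"
  unfolding seq_less_iff by auto

lemma seq_less_asym: "seq_less p q \<Longrightarrow> \<not> seq_less q p"
  unfolding seq_less_iff by (metis less_asym linorder_neqE_nat)

lemma seq_less_trans: "seq_less p q \<Longrightarrow> seq_less q r \<Longrightarrow> seq_less p r"
  unfolding seq_less_iff
proof (elim exE conjE)
  fix n m assume a: "\<forall>i<n. p i = q i" "p n < q n" "\<forall>i<m. q i = r i" "q m < r m"
  show "\<exists>n. (\<forall>i<n. p i = r i) \<and> p n < r n"
  proof (cases "n < m")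
    case True then show ?thesis using a by (intro exI[of _ n]) auto
  next
    case False
    have "\<forall>i<m. p i = r i" using a False by auto
    moreover have "p m < r m"
    proof (cases "n = m")
      case True then show ?thesis using a by simp
    next
      case F: False
      hence "m<n" using False by simp
      then show ?thesis using a by simp
    qed
    ultimately show ?thesis by blast
  qed
qed

lemma seq_less_total: "p \<noteq> q \<Longrightarrow> seq_less p q \<or> seq_less q p"
proof -
  assume "p \<noteq> q"
  then have "\<exists>i. p i \<noteq> q i" by auto
  define n where "n = (LEAST i. p i \<noteq> q i)"
  have "p n \<noteq> q n" unfolding n_def by (rule LeastI_ex) fact
  moreover have eq: "\<forall>i<n. p i = q i" unfolding n_def using not_less_Least by blast
  have eq': "\<forall>i<n. q i = p i" using eq by simp
  from \<open>p n \<noteq> q n\<close> have "p n < q n \<or> q n < p n" by arith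
  then show ?thesis
  proof
    assume "p n < q n" then have "seq_less p q" unfolding seq_less_iff using eq by blast
    thus ?thesis ..
  next
    assume "q n < p n" then have "seq_less q p" unfolding seq_less_iff using eq' by blast
    thus ?thesis ..
  qed
qed



locale coding =
  fixes c :: "real \<Rightarrow> nat \<Rightarrow> nat"
  assumes C1: "surj c"
  and C2: "\<And>x m. \<exists>e>0. \<forall>y. x \<le> y \<and> y < x+e \<longrightarrow> restr (c y) m = restr (c x) m"
  and C3: "\<And>x e. e>0 \<Longrightarrow> \<exists>m. \<forall>u. restr (c u) m = restr (c x) m \<longrightarrow> \<bar>u-x\<bar> < e"
  and C4: "\<And>x y. x<y \<Longrightarrow> c x 0 = c y 0 \<Longrightarrow> seq_less (c x) (c y)"
begin

lemma right_nb: "\<exists>e>0. \<forall>y. x < y \<and> y < x+e \<longrightarrow> seq_less (c x) (c y) \<and> restr (c y) m = restr (c x) m"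
proof -
  obtain e where e: "e>0" "\<forall>y. x \<le> y \<and> y < x+e \<longrightarrow> restr (c y) (Suc m) = restr (c x) (Suc m)"
    using C2 by blast
  show ?thesis
  proof (intro exI[of _ e] conjI allI impI)
    fix y assume y: "x < y \<and> y < x+e"
    hence "x \<le> y \<and> y < x+e" by simp
    hence r: "restr (c y) (Suc m) = restr (c x) (Suc m)" by (rule e(2)[rule_format])
    hence "c y 0 = c x 0" unfolding restr_eq_iff by blast
    then show "seq_less (c x) (c y)" using y by (intro C4) auto
    show "restr (c y) m = restr (c x) m" using r by (rule restr_mono) simp
  qed (fact)
qed

lemma ge_of_less: "c u 0 = c x 0 \<Longrightarrow> seq_less (c x) (c u) \<Longrightarrow> x < u"
proof (rule ccontr)
  assume a: "c u 0 = c x 0" "seq_less (c x) (c u)" "\<not> x<u"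
  show False
  proof (cases "u = x")
    case True with a show False using seq_less_irrefl by simp
  next
    case False hence "u<x" using a by simp
    hence "seq_less (c u) (c x)" using C4 a by simp
    with a show False using seq_less_asym by blast
  qed
qed

end

lemma less_index: "seq_less t p \<Longrightarrow> restr t m = restr p m \<Longrightarrow> \<exists>j. m \<le> j \<and> restr t j = restr p j \<and> t j < p j"
proof -
  assume a: "seq_less t p" "restr t m = restr p m"
  then obtain j where j: "restr t j = restr p j" "t j < p j" unfolding seq_less_def by blast
  have "m \<le> j"
  proof (rule ccontr)
    assume "\<not> m \<le> j"
    then have "t j = p j" using a(2) by (auto simp: restr_eq_iff)
    with j show False by simp
  qed
  with j show ?thesis by blast
qed

lemma less_of_prefix: "restr t j = restr p j \<Longrightarrow> t j < p j \<Longrightarrow> restr p (Suc j) = restr q (Suc j) \<Longrightarrow> seq_less t q"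
proof -
  assume a: "restr t j = restr p j" "t j < p j" "restr p (Suc j) = restr q (Suc j)"
  have "restr p j = restr q j" using a(3) by (rule restr_mono) simp
  moreover have "p j = q j" using a(3) by (simp add: restr_Suc)
  ultimately show ?thesis unfolding seq_less_def using a(1,2) by (intro exI[of _ j]) simp
qed

lemma fruit_mem: "x \<in> fruit V p \<longleftrightarrow> (\<forall>n. x \<in> V (restr p n))"
  unfolding fruit_def by blast

lemma restr0[simp]: "restr p 0 = []" by (simp add: restr_def)


context coding begin

lemma forward:
  assumes fc: "continuous_map sorgenfrey T f" and fo: "open_map sorgenfrey T f"
    and fs: "f ` topspace sorgenfrey = topspace T"
  shows "\<exists>V. sorgenfrey_base T V"
proof -
  define I where "I a = {x. restr (c x) (length a) = a}" for a
  define V where "V a = f ` I a" for a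
  have fs': "range f = topspace T" using fs by simp
  have I_open: "openin sorgenfrey (I a)" for a
    unfolding sorg_open_iff I_def
  proof
    fix u assume u: "u \<in> {x. restr (c x) (length a) = a}"
    obtain e where e: "e>0" "\<forall>y. u \<le> y \<and> y < u+e \<longrightarrow> restr (c y) (length a) = restr (c u) (length a)"
      using C2 by blast
    have "{u..<u+e} \<subseteq> {x. restr (c x) (length a) = a}"
    proof
      fix y assume "y \<in> {u..<u+e}"
      then have "u \<le> y \<and> y < u+e" by simp
      then have "restr (c y) (length a) = restr (c u) (length a)" by (rule e(2)[rule_format])
      then show "y \<in> {x. restr (c x) (length a) = a}" using u by simp
    qed
    then show "\<exists>e>0. {u..<u+e} \<subseteq> {x. restr (c x) (length a) = a}" using e(1) by blast
  qed
  have V_open: "openin T (V a)" for a using fo I_open unfolding open_map_def V_def by blast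
  have V_nil: "V [] = topspace T" using fs' by (simp add: V_def I_def)
  have V_cov: "V a = (\<Union>n. V (a@[n]))" for a
  proof -
    have "I a = (\<Union>n. I (a@[n]))"
    proof
      show "I a \<subseteq> (\<Union>n. I (a@[n]))"
      proof
        fix x assume "x \<in> I a"
        then have "restr (c x) (length a) = a" by (simp add: I_def)
        then have "restr (c x) (length (a @ [c x (length a)])) = a @ [c x (length a)]"
          by (simp add: restr_Suc)
        then show "x \<in> (\<Union>n. I (a@[n]))" unfolding I_def by blast
      qed
      show "(\<Union>n. I (a@[n])) \<subseteq> I a"
      proof
        fix x assume "x \<in> (\<Union>n. I (a@[n]))"
        then obtain n where "restr (c x) (Suc (length a)) = a @ [n]" by (auto simp: I_def)
        then have "restr (c x) (length a) @ [c x (length a)] = a @ [n]" by (simp add: restr_Suc)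
        then show "x \<in> I a" by (simp add: I_def)
      qed
    qed
    then show ?thesis unfolding V_def by (simp add: image_UN)
  qed
  have fruit_f: "f y \<in> fruit V (c y)" for y
    unfolding fruit_mem V_def I_def by auto
  have K: "c y \<in> BB V (f y) T" for y
  proof -
    define t where "t = c y"
    define x where "x = f y"
    define W where "W m = {u. u = y \<or> (seq_less t (c u) \<and> restr (c u) m = restr t m)}" for m
    have W_open: "openin sorgenfrey (W m)" for m
      unfolding sorg_open_iff
    proof
      fix u assume u: "u \<in> W m"
      obtain e where e: "e>0" "\<forall>v. u < v \<and> v < u+e \<longrightarrow> seq_less (c u) (c v) \<and> restr (c v) m = restr (c u) m"
        using right_nb by blast
      have "{u..<u+e} \<subseteq> W m"
      proof
        fix v assume v: "v \<in> {u..<u+e}"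
        show "v \<in> W m"
        proof (cases "v = u")
          case True then show ?thesis using u by simp
        next
          case False
          then have "u < v \<and> v < u+e" using v by simp
          then have sv: "seq_less (c u) (c v)" and rv: "restr (c v) m = restr (c u) m"
            using e(2) by blast+
          show ?thesis
          proof (cases "u = y")
            case True then show ?thesis using sv rv unfolding W_def t_def by simp
          next
            case False
            then have "seq_less t (c u)" "restr (c u) m = restr t m" using u unfolding W_def by auto
            then show ?thesis using sv rv seq_less_trans unfolding W_def by auto
          qed
        qed
      qed
      then show "\<exists>e>0. {u..<u+e} \<subseteq> W m" using e(1) by blast
    qed
    have W_img: "f ` W m = cut V t m \<union> {x}" for m
    proof
      show "f ` W m \<subseteq> cut V t m \<union> {x}"
      proof
        fix w assume "w \<in> f ` W m"
        then obtain u where u: "u \<in> W m" "w = f u" by blast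
        show "w \<in> cut V t m \<union> {x}"
        proof (cases "u = y")
          case True then show ?thesis using u x_def by simp
        next
          case False
          then have "seq_less t (c u)" "restr (c u) m = restr t m" using u unfolding W_def by auto
          then have "c u \<in> rsequences t m" unfolding rsequences_def by simp
          then show ?thesis using fruit_f[of u] u unfolding cut_def by blast
        qed
      qed
      show "cut V t m \<union> {x} \<subseteq> f ` W m"
      proof
        fix w assume w: "w \<in> cut V t m \<union> {x}"
        show "w \<in> f ` W m"
        proof (cases "w = x")
          case True
          have "y \<in> W m" unfolding W_def by simp
          then show ?thesis using True x_def by blast
        next
          case False
          then obtain p where p: "p \<in> rsequences t m" "w \<in> fruit V p" using w unfolding cut_def by blast
          then have p1: "seq_less t p" "restr t m = restr p m" unfolding rsequences_def by auto
          then obtain j where j: "m \<le> j" "restr t j = restr p j" "t j < p j" using less_index by blast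
          have "w \<in> V (restr p (Suc j))" using p(2) unfolding fruit_mem by blast
          then obtain u where u0: "u \<in> I (restr p (Suc j))" "w = f u"
            unfolding V_def by blast
          have u: "w = f u" "restr (c u) (Suc j) = restr p (Suc j)" using u0 unfolding I_def by simp_all
          have "seq_less t (c u)" using less_of_prefix[OF j(2,3) u(2)[symmetric]] .
          moreover have "restr (c u) m = restr p m" by (rule restr_mono[OF u(2)]) (use j(1) in simp)
          then have "restr (c u) m = restr t m" using p1(2) by simp
          ultimately have "u \<in> W m" unfolding W_def by blast
          then show ?thesis using u(1) by blast
        qed
      qed
    qed
    have "t \<in> branches V x" unfolding branches_def t_def x_def using fruit_f by simp
    moreover have "open_nbhd_base T x {cut V t m \<union> {x} | m. True}"
      unfolding open_nbhd_base_def
    proof (intro conjI ballI allI impI)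
      fix B assume "B \<in> {cut V t m \<union> {x} | m. True}"
      then obtain m where "B = cut V t m \<union> {x}" by blast
      then have "B = f ` W m" using W_img by simp
      then show "openin T B" using fo W_open unfolding open_map_def by blast
    next
      fix B assume "B \<in> {cut V t m \<union> {x} | m. True}"
      then show "x \<in> B" by auto
    next
      fix U assume U: "openin T U \<and> x \<in> U"
      have "openin sorgenfrey {z \<in> topspace sorgenfrey. f z \<in> U}"
        by (rule openin_continuous_map_preimage[OF fc conjunct1[OF U]])
      then have "openin sorgenfrey {z. f z \<in> U}" by simp
      moreover have "y \<in> {z. f z \<in> U}" using U x_def by simp
      ultimately obtain e where e: "e>0" "{y..<y+e} \<subseteq> {z. f z \<in> U}"
        unfolding sorg_open_iff by blast
      obtain m0 where m0: "\<forall>u. restr (c u) m0 = restr (c y) m0 \<longrightarrow> \<bar>u-y\<bar> < e"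
        using C3[OF e(1)] by blast
      have "f ` W (Suc m0) \<subseteq> U"
      proof
        fix w assume "w \<in> f ` W (Suc m0)"
        then obtain u where u: "u \<in> W (Suc m0)" "w = f u" by blast
        show "w \<in> U"
        proof (cases "u = y")
          case True then show ?thesis using u U x_def by simp
        next
          case False
          then have a: "seq_less t (c u)" "restr (c u) (Suc m0) = restr t (Suc m0)"
            using u unfolding W_def by auto
          have "c u 0 = t 0" using a(2) unfolding restr_eq_iff by blast
          then have "c u 0 = c y 0" by (simp add: t_def)
          then have "y < u" using a(1) ge_of_less unfolding t_def by blast
          moreover have "restr (c u) m0 = restr t m0" by (rule restr_mono[OF a(2)]) simp
          then have "restr (c u) m0 = restr (c y) m0" by (simp add: t_def)
          then have "\<bar>u-y\<bar> < e" using m0 by blast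
          ultimately have "u \<in> {y..<y+e}" by simp
          then show ?thesis using e(2) u(2) by blast
        qed
      qed
      then have "cut V t (Suc m0) \<union> {x} \<subseteq> U" using W_img[of "Suc m0"] by simp
      moreover have "cut V t (Suc m0) \<union> {x} \<in> {cut V t m \<union> {x} | m. True}" by blast
      ultimately show "\<exists>B\<in>{cut V t m \<union> {x} | m. True}. B \<subseteq> U" by blast
    qed
    ultimately have "t \<in> BB V x T" unfolding BB_def by blast
    then show ?thesis unfolding t_def x_def .
  qed
  have "sorgenfrey_base T V"
    unfolding sorgenfrey_base_def
  proof (intro conjI)
    show "open_scheme T V" unfolding open_scheme_def using V_open by blast
    show "complete_scheme V" unfolding complete_scheme_def
    proof
      fix q
      obtain y where "q = c y" using C1 by (metis surjD)
      then show "fruit V q \<noteq> {}" using fruit_f by blast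
    qed
    show "covering_scheme (topspace T) V" unfolding covering_scheme_def using V_nil V_cov by blast
    show "\<forall>x\<in>topspace T. \<forall>q\<in>branches V x. \<forall>n. \<exists>t\<in>BB V x T. restr t n = restr q n"
    proof (intro ballI allI)
      fix x q n assume "x \<in> topspace T" "q \<in> branches V x"
      then have "x \<in> V (restr q n)" unfolding branches_def fruit_mem by blast
      then obtain y where y: "y \<in> I (restr q n)" "x = f y" unfolding V_def by blast
      then have "restr (c y) n = restr q n" unfolding I_def by simp
      then show "\<exists>t\<in>BB V x T. restr t n = restr q n" using K y(2) by blast
    qed
    show "\<forall>q. \<exists>z\<in>topspace T. q \<in> BB V z T"
    proof
      fix q
      obtain y where "q = c y" using C1 by (metis surjD)
      then show "\<exists>z\<in>topspace T. q \<in> BB V z T" using K fs' by blast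
    qed
  qed
  then show ?thesis by blast
qed

end



definition Dg :: "real \<Rightarrow> nat" where "Dg s = nat \<lfloor>s/(1-s)\<rfloor>"
definition Tm :: "real \<Rightarrow> real" where "Tm s = (s * (real (Dg s) + 1) - real (Dg s)) * (real (Dg s) + 2)"
definition Ee :: "nat \<Rightarrow> real \<Rightarrow> real" where "Ee n t = (real n + t/(real n + 2)) / (real n + 1)"

lemma D_char:
  assumes "0 \<le> s" "s < 1"
  shows "real (Dg s) \<le> s * (real (Dg s) + 1) \<and> s * (real (Dg s) + 2) < real (Dg s) + 1"
proof -
  have pos: "0 < 1 - s" using assms by simp
  have q: "0 \<le> s/(1-s)" using assms by simp
  define k where "k = \<lfloor>s/(1-s)\<rfloor>"
  have k0: "0 \<le> k" unfolding k_def using q by simp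
  have kk: "real_of_int k \<le> s/(1-s)" "s/(1-s) < real_of_int k + 1" unfolding k_def by linarith+
  have eq: "real (Dg s) = real_of_int k" unfolding Dg_def k_def[symmetric] using k0 by simp
  have "real_of_int k * (1-s) \<le> s" using kk(1) pos by (simp add: pos_le_divide_eq)
  moreover have "s < (real_of_int k + 1) * (1-s)" using kk(2) pos by (simp add: pos_divide_less_eq)
  ultimately show ?thesis unfolding eq by (simp add: algebra_simps)
qed

lemma D_eq:
  assumes "0 \<le> s" "s < 1" "real n \<le> s * (real n + 1)" "s * (real n + 2) < real n + 1"
  shows "Dg s = n"
proof -
  have pos: "0 < 1 - s" using assms by simp
  have "real n * (1-s) \<le> s" using assms(3) by (simp add: algebra_simps)
  then have a: "real n \<le> s/(1-s)" using pos by (simp add: pos_le_divide_eq)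
  have "s < (real n + 1) * (1-s)" using assms(4) by (simp add: algebra_simps)
  then have b: "s/(1-s) < real n + 1" using pos by (simp add: pos_divide_less_eq)
  have "\<lfloor>s/(1-s)\<rfloor> = int n" using a b by (simp add: floor_eq_iff)
  then show ?thesis unfolding Dg_def by simp
qed

lemma T_range:
  assumes "0 \<le> s" "s < 1"
  shows "0 \<le> Tm s \<and> Tm s < 1"
proof -
  define n where "n = real (Dg s)"
  have n0: "0 \<le> n" unfolding n_def by simp
  have c: "n \<le> s * (n + 1)" "s * (n + 2) < n + 1" using D_char[OF assms] unfolding n_def by auto
  have t: "Tm s = (s * (n + 1) - n) * (n + 2)" unfolding Tm_def n_def by simp
  have "0 \<le> (s * (n + 1) - n) * (n + 2)" using c(1) n0 by simp
  moreover have "(s * (n + 1) - n) * (n + 2) < 1"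
  proof -
    have "s * (n + 2) * (n + 1) < (n + 1) * (n + 1)" using c(2) n0 by (simp add: mult_strict_right_mono)
    then show ?thesis by (simp add: algebra_simps)
  qed
  ultimately show ?thesis unfolding t by simp
qed

lemma D_mono:
  assumes "0 \<le> s" "s \<le> s'" "s' < 1"
  shows "Dg s \<le> Dg s'"
proof -
  have "s/(1-s) \<le> s'/(1-s')" using assms by (intro frac_le) auto
  then show ?thesis unfolding Dg_def by (intro nat_mono floor_mono)
qed

lemma T_diff:
  assumes "Dg s = Dg s'"
  shows "Tm s' - Tm s = (s' - s) * (real (Dg s) + 1) * (real (Dg s) + 2)"
  unfolding Tm_def assms by (simp add: algebra_simps)

lemma D_E:
  assumes "0 \<le> t" "t < 1"
  shows "Dg (Ee n t) = n \<and> Tm (Ee n t) = t"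
proof -
  have p1: "0 < real n + 1" and p2: "0 < real n + 2" by simp_all
  have e1: "Ee n t * (real n + 1) = real n + t/(real n + 2)" unfolding Ee_def using p1 by simp
  have g0: "0 \<le> Ee n t" unfolding Ee_def using assms by simp
  have "t/(real n + 2) < 1" using assms p2 by simp
  then have "Ee n t * (real n + 1) < real n + 1" using e1 by simp
  then have l1: "Ee n t < 1" using p1 by simp
  have a: "real n \<le> Ee n t * (real n + 1)" using e1 assms by simp
  have "Ee n t * (real n + 2) * (real n + 1) = (Ee n t * (real n + 1)) * (real n + 2)"
    by (simp add: algebra_simps)
  also have "\<dots> = (real n + t/(real n + 2)) * (real n + 2)" using e1 by simp
  also have "\<dots> = real n * (real n + 2) + t/(real n + 2) * (real n + 2)" by (simp add: distrib_right)
  also have "\<dots> = real n * (real n + 2) + t" using p2 by simp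
  also have "\<dots> < (real n + 1) * (real n + 1)" using assms by (simp add: algebra_simps)
  finally have "Ee n t * (real n + 2) < real n + 1" using p1 by (simp add: mult_less_cancel_right)
  then have d: "Dg (Ee n t) = n" using D_eq[OF g0 l1 a] by simp
  have "Tm (Ee n t) = (Ee n t * (real n + 1) - real n) * (real n + 2)" unfolding Tm_def d ..
  also have "\<dots> = t" using e1 p2 by simp
  finally show ?thesis using d by simp
qed

lemma E_T:
  assumes "0 \<le> s" "s < 1"
  shows "Ee (Dg s) (Tm s) = s"
proof -
  define n where "n = real (Dg s)"
  have p1: "n + 1 \<noteq> 0" "n + 2 \<noteq> 0" unfolding n_def by simp_all
  have "Tm s / (n + 2) = s * (n + 1) - n" unfolding Tm_def n_def[symmetric] using p1 by simp
  then have "n + Tm s / (n + 2) = s * (n+1)" by simp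
  then show ?thesis unfolding Ee_def n_def[symmetric] using p1 by simp
qed

lemma E_mono: "t < t' \<Longrightarrow> Ee n t < Ee n t'"
  unfolding Ee_def by (simp add: divide_strict_right_mono)

lemma E_mono_iff: "Ee n t \<le> Ee n t' \<longleftrightarrow> t \<le> t'"
proof
  assume a: "Ee n t \<le> Ee n t'"
  show "t \<le> t'"
  proof (rule ccontr)
    assume "\<not> t \<le> t'" then have "t' < t" by simp
    then have "Ee n t' < Ee n t" by (rule E_mono)
    with a show False by simp
  qed
next
  assume "t \<le> t'"
  then show "Ee n t \<le> Ee n t'"
  proof (cases "t = t'")
    case False with \<open>t \<le> t'\<close> have "t < t'" by simp
    then show ?thesis using E_mono[of t t' n] by simp
  qed simp
qed

lemma E_range: "0 \<le> t \<Longrightarrow> t \<le> 1 \<Longrightarrow> 0 \<le> Ee n t \<and> Ee n t \<le> 1"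
proof -
  assume a: "0 \<le> t" "t \<le> 1"
  have "t/(real n + 2) \<le> 1" using a by simp
  then have "real n + t/(real n + 2) \<le> real n + 1" by simp
  then show ?thesis unfolding Ee_def using a by simp
qed

lemma E_lt1: "Ee n 1 < 1"
proof -
  have "1/(real n + 2) < 1" by simp
  then have "real n + 1/(real n + 2) < real n + 1" by simp
  then show ?thesis unfolding Ee_def by simp
qed

lemma E0: "Ee n 0 = real n / (real n + 1)" unfolding Ee_def by simp




definition hh :: "real \<Rightarrow> nat \<Rightarrow> nat" where "hh s k = Dg ((Tm ^^ k) s)"

lemma iter_range: "0 \<le> s \<Longrightarrow> s < 1 \<Longrightarrow> 0 \<le> (Tm^^k) s \<and> (Tm^^k) s < 1"
  by (induction k) (simp_all add: T_range)

lemma hh_Suc: "hh s (Suc k) = hh (Tm s) k"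
  unfolding hh_def by (simp add: funpow_Suc_right del: funpow.simps)

lemma hh_0: "hh s 0 = Dg s" unfolding hh_def by simp

lemma restr_hh_Suc: "restr (hh s) (Suc k) = Dg s # restr (hh (Tm s)) k"
proof -
  have "(\<lambda>k. hh s (Suc k)) = hh (Tm s)" by (rule ext) (rule hh_Suc)
  then show ?thesis using restr_Suc0[of "hh s" k] by (simp add: hh_0)
qed

lemma prod_ge2: "2 \<le> (real n + 1) * (real n + 2)"
proof -
  have "1 * 2 \<le> (real n + 1) * (real n + 2)" by (rule mult_mono) auto
  then show ?thesis by simp
qed

lemma shrink:
  "0 \<le> s \<Longrightarrow> s < 1 \<Longrightarrow> 0 \<le> s' \<Longrightarrow> s' < 1 \<Longrightarrow> restr (hh s) k = restr (hh s') k
   \<Longrightarrow> \<bar>s - s'\<bar> * 2^k < 1"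
proof (induction k arbitrary: s s')
  case 0 then show ?case by (auto simp: abs_if)
next
  case (Suc k)
  have d: "Dg s = Dg s'" and r: "restr (hh (Tm s)) k = restr (hh (Tm s')) k"
    using Suc.prems(5) unfolding restr_hh_Suc by simp_all
  have IH: "\<bar>Tm s - Tm s'\<bar> * 2^k < 1"
    using Suc.IH[OF _ _ _ _ r] T_range[OF Suc.prems(1,2)] T_range[OF Suc.prems(3,4)] by blast
  define n where "n = real (Dg s)"
  have td: "Tm s' - Tm s = (s' - s) * ((n + 1) * (n + 2))" using T_diff[OF d] unfolding n_def by simp
  have "\<bar>Tm s - Tm s'\<bar> = \<bar>s - s'\<bar> * ((n + 1) * (n + 2))"
  proof -
    have "\<bar>Tm s - Tm s'\<bar> = \<bar>Tm s' - Tm s\<bar>" by simp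
    also have "\<dots> = \<bar>s' - s\<bar> * ((n + 1) * (n + 2))" unfolding td abs_mult n_def by simp
    finally show ?thesis by (simp add: abs_minus_commute)
  qed
  moreover have "2 \<le> (n + 1) * (n + 2)" unfolding n_def by (rule prod_ge2)
  ultimately have "\<bar>s - s'\<bar> * 2 \<le> \<bar>Tm s - Tm s'\<bar>" by (simp add: mult_left_mono)
  then have "\<bar>s - s'\<bar> * 2 * 2^k \<le> \<bar>Tm s - Tm s'\<bar> * 2^k" by (simp add: mult_right_mono)
  then have "\<bar>s - s'\<bar> * 2 * 2^k < 1" using IH by linarith
  then show ?case by (simp add: mult.assoc)
qed

lemma hh_le:
  "0 \<le> s \<Longrightarrow> s < s' \<Longrightarrow> s' < 1 \<Longrightarrow> restr (hh s) k = restr (hh s') k \<Longrightarrow> hh s k \<le> hh s' k"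
proof (induction k arbitrary: s s')
  case 0 then show ?case unfolding hh_0 by (intro D_mono) auto
next
  case (Suc k)
  have d: "Dg s = Dg s'" and r: "restr (hh (Tm s)) k = restr (hh (Tm s')) k"
    using Suc.prems(4) unfolding restr_hh_Suc by simp_all
  define n where "n = real (Dg s)"
  have td: "Tm s' - Tm s = (s' - s) * ((n + 1) * (n + 2))" using T_diff[OF d] unfolding n_def by simp
  have "0 < (s' - s) * ((n + 1) * (n + 2))" using Suc.prems(2) unfolding n_def by simp
  then have lt: "Tm s < Tm s'" using td by simp
  have "0 \<le> Tm s" "Tm s' < 1" using T_range Suc.prems by auto
  then have "hh (Tm s) k \<le> hh (Tm s') k" using Suc.IH[OF _ lt _ r] by blast
  then show ?case by (simp add: hh_Suc)
qed

lemma hh_less: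
  assumes "0 \<le> s" "s < s'" "s' < 1"
  shows "seq_less (hh s) (hh s')"
proof -
  have "\<exists>k. hh s k \<noteq> hh s' k"
  proof (rule ccontr)
    assume "\<not> (\<exists>k. hh s k \<noteq> hh s' k)"
    then have all: "restr (hh s) k = restr (hh s') k" for k unfolding restr_eq_iff by simp
    obtain k where k: "1/(s'-s) < 2^k" using real_arch_pow[of 2 "1/(s'-s)"] by auto
    have "1 < (s'-s) * 2^k" using k assms by (simp add: divide_less_eq mult.commute)
    moreover have "\<bar>s - s'\<bar> * 2^k < 1" using shrink[OF _ _ _ _ all[of k]] assms by simp
    ultimately show False using assms by simp
  qed
  define n where "n = (LEAST i. hh s i \<noteq> hh s' i)"
  have ne: "hh s n \<noteq> hh s' n" unfolding n_def by (rule LeastI_ex) fact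
  have eq: "\<forall>i<n. hh s i = hh s' i" unfolding n_def using not_less_Least by blast
  then have "restr (hh s) n = restr (hh s') n" unfolding restr_eq_iff by simp
  then have "hh s n \<le> hh s' n" using hh_le assms by blast
  with ne have "hh s n < hh s' n" by simp
  then show ?thesis unfolding seq_less_iff using eq by blast
qed

lemma hh_right:
  "0 \<le> s \<Longrightarrow> s < 1 \<Longrightarrow> \<exists>e>0. \<forall>s'. s \<le> s' \<and> s' < s+e \<longrightarrow> restr (hh s') m = restr (hh s) m"
proof (induction m arbitrary: s)
  case 0 then show ?case by (intro exI[of _ 1]) (simp add: restr_def)
next
  case (Suc m)
  define n where "n = real (Dg s)"
  have c: "n \<le> s * (n + 1)" "s * (n + 2) < n + 1" using D_char[OF Suc.prems] unfolding n_def by auto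
  have ts: "0 \<le> Tm s" "Tm s < 1" using T_range[OF Suc.prems] by auto
  obtain e' where e': "e'>0" "\<forall>s'. Tm s \<le> s' \<and> s' < Tm s + e' \<longrightarrow> restr (hh s') m = restr (hh (Tm s)) m"
    using Suc.IH[OF ts] by blast
  have pp: "0 < (n + 1) * (n + 2)" unfolding n_def by simp
  have sl: "s < (n+1)/(n+2)" using c(2) unfolding n_def by (simp add: pos_less_divide_eq)
  define e where "e = min (e' / ((n + 1) * (n + 2))) ((n+1)/(n+2) - s)"
  have e0: "e > 0" unfolding e_def using e'(1) pp sl by simp
  show ?case
  proof (intro exI[of _ e] conjI allI impI)
    show "e > 0" by (rule e0)
    fix s' assume s': "s \<le> s' \<and> s' < s + e"
    have ee1: "e \<le> (n+1)/(n+2) - s" "e \<le> e' / ((n + 1) * (n + 2))" unfolding e_def by simp_all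
    have "s' < (n+1)/(n+2)" using s' ee1 by linarith
    then have c2: "s' * (n + 2) < n + 1" unfolding n_def by (simp add: pos_less_divide_eq)
    have "s * (n + 1) \<le> s' * (n + 1)" using s' unfolding n_def by (simp add: mult_right_mono)
    then have c1: "n \<le> s' * (n + 1)" using c(1) by simp
    have s'0: "0 \<le> s'" using s' Suc.prems by simp
    have s'1: "s' < 1"
    proof (rule ccontr)
      assume "\<not> s' < 1"
      then have "1 * (n + 2) \<le> s' * (n + 2)" by (intro mult_right_mono) (auto simp: n_def)
      then show False using c2 by simp
    qed
    have d: "Dg s' = Dg s" using D_eq[OF s'0 s'1] c1 c2 unfolding n_def by simp
    have td: "Tm s' - Tm s = (s' - s) * ((n + 1) * (n + 2))" using T_diff[OF d[symmetric]] unfolding n_def by simp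
    have "s' - s < e' / ((n + 1) * (n + 2))" using s' ee1 by linarith
    then have "(s' - s) * ((n + 1) * (n + 2)) < e'" using pp by (simp add: pos_less_divide_eq)
    moreover have "0 \<le> (s' - s) * ((n + 1) * (n + 2))" using s' pp by simp
    ultimately have "Tm s \<le> Tm s' \<and> Tm s' < Tm s + e'" using td by simp
    then have "restr (hh (Tm s')) m = restr (hh (Tm s)) m" using e'(2) by blast
    then show "restr (hh s') (Suc m) = restr (hh s) (Suc m)" unfolding restr_hh_Suc d by simp
  qed
qed



definition Ew :: "nat list \<Rightarrow> real \<Rightarrow> real" where "Ew w t = foldr Ee w t"

lemma Ew_Nil[simp]: "Ew [] t = t" unfolding Ew_def by simp
lemma Ew_Cons: "Ew (a # w) t = Ee a (Ew w t)" unfolding Ew_def by simp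
lemma Ew_snoc: "Ew (w @ [a]) t = Ew w (Ee a t)" unfolding Ew_def by simp

lemma Ew_range: "0 \<le> t \<Longrightarrow> t \<le> 1 \<Longrightarrow> 0 \<le> Ew w t \<and> Ew w t \<le> 1"
  by (induction w) (simp_all add: Ew_Cons E_range)

lemma Ew_mono: "t < t' \<Longrightarrow> Ew w t < Ew w t'"
  by (induction w) (simp_all add: Ew_Cons E_mono)

lemma Ew_le_iff: "Ew w t \<le> Ew w t' \<longleftrightarrow> t \<le> t'"
  by (induction w) (simp_all add: Ew_Cons E_mono_iff)

lemma E1_bound: "s < Ee a 1 \<Longrightarrow> s * (real a + 2) < real a + 1"
proof -
  assume a: "s < Ee a 1"
  have p1: "0 < real a + 1" and p2: "0 < real a + 2" by simp_all
  have "s * (real a + 1) < real a + 1/(real a + 2)" using a p1 unfolding Ee_def by (simp add: pos_less_divide_eq)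
  then have "s * (real a + 1) * (real a + 2) < (real a + 1/(real a + 2)) * (real a + 2)"
    using p2 by (simp add: mult_strict_right_mono)
  also have "\<dots> = real a * (real a + 2) + 1/(real a + 2) * (real a + 2)" by (simp add: distrib_right)
  also have "\<dots> = real a * (real a + 2) + 1" using p2 by simp
  also have "\<dots> = (real a + 1) * (real a + 1)" by (simp add: algebra_simps)
  finally have "s * (real a + 2) * (real a + 1) < (real a + 1) * (real a + 1)" by (simp add: algebra_simps)
  then show ?thesis using p1 by (simp add: mult_less_cancel_right)
qed

lemma key_prefix: "Ew w 0 \<le> s \<Longrightarrow> s < Ew w 1 \<Longrightarrow> restr (hh s) (length w) = w"
proof (induction w arbitrary: s)
  case Nil then show ?case by (simp add: restr_def)
next
  case (Cons a w)
  define A where "A = Ew w 0"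
  define B where "B = Ew w 1"
  have A: "0 \<le> A" "A \<le> 1" using Ew_range[of 0 w] unfolding A_def by simp_all
  have B: "0 \<le> B" "B \<le> 1" using Ew_range[of 1 w] unfolding B_def by simp_all
  have s1: "Ee a A \<le> s" "s < Ee a B" using Cons.prems unfolding A_def B_def Ew_Cons by simp_all
  have "Ee a 0 \<le> Ee a A" using A(1) by (simp add: E_mono_iff)
  then have g0: "Ee a 0 \<le> s" using s1 by simp
  have "Ee a B \<le> Ee a 1" using B(2) by (simp add: E_mono_iff)
  then have l1: "s < Ee a 1" using s1 by simp
  have p1: "0 < real a + 1" by simp
  have s0: "0 \<le> s" using g0 unfolding E0 by (smt (verit) divide_nonneg_nonneg of_nat_0_le_iff)
  have sl1: "s < 1" using l1 E_lt1[of a] by simp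
  have c1: "real a \<le> s * (real a + 1)" using g0 p1 unfolding E0 by (simp add: pos_divide_le_eq)
  have c2: "s * (real a + 2) < real a + 1" using E1_bound[OF l1] .
  have d: "Dg s = a" using D_eq[OF s0 sl1 c1 c2] .
  have es: "Ee a (Tm s) = s" using E_T[OF s0 sl1] d by simp
  have "A \<le> Tm s" using s1(1) es E_mono_iff by metis
  moreover have "Tm s < B"
  proof (rule ccontr)
    assume "\<not> Tm s < B" then have "B \<le> Tm s" by simp
    then have "Ee a B \<le> Ee a (Tm s)" by (simp add: E_mono_iff)
    then show False using s1(2) es by simp
  qed
  ultimately have "restr (hh (Tm s)) (length w) = w" using Cons.IH unfolding A_def B_def by blast
  then show ?case using d by (simp add: restr_hh_Suc)
qed

lemma hh_surj: "\<exists>s. 0 \<le> s \<and> s < 1 \<and> hh s = p"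
proof -
  define \<alpha> where "\<alpha> k = Ew (restr p k) 0" for k
  define \<beta> where "\<beta> k = Ew (restr p k) 1" for k
  have aS: "\<alpha> k \<le> \<alpha> (Suc k)" for k
  proof -
    have "0 \<le> Ee (p k) 0" using E_range[of 0] by simp
    then show ?thesis unfolding \<alpha>_def restr_Suc Ew_snoc by (simp add: Ew_le_iff)
  qed
  have bS: "\<beta> (Suc k) < \<beta> k" for k
    unfolding \<beta>_def restr_Suc Ew_snoc using Ew_mono E_lt1 by blast
  have ab: "\<alpha> k < \<beta> k" for k unfolding \<alpha>_def \<beta>_def by (rule Ew_mono) simp
  have inc: "incseq \<alpha>" using aS by (rule incseq_SucI)
  have dec: "decseq \<beta>" using bS by (intro decseq_SucI) (simp add: less_imp_le)
  have abkj: "\<alpha> k \<le> \<beta> j" for k j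
  proof (cases "k \<le> j")
    case True
    then have "\<alpha> k \<le> \<alpha> j" using inc by (simp add: incseq_def)
    then show ?thesis using ab[of j] by simp
  next
    case False
    then have "\<beta> k \<le> \<beta> j" using dec by (simp add: decseq_def)
    then show ?thesis using ab[of k] by simp
  qed
  define s where "s = (SUP k. \<alpha> k)"
  have bdd: "bdd_above (range \<alpha>)" using abkj[of _ 0] by (intro bdd_aboveI2) blast
  have as: "\<alpha> k \<le> s" for k unfolding s_def using cSUP_upper[OF _ bdd, of k] by simp
  have sb: "s \<le> \<beta> j" for j unfolding s_def using abkj by (intro cSUP_least) auto
  have s0: "0 \<le> s" using as[of 0] unfolding \<alpha>_def by (simp add: restr_def)
  have s1: "s < 1" using sb[of 1] bS[of 0] unfolding \<beta>_def by (simp add: restr_def)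
  have r: "restr (hh s) k = restr p k" for k
  proof -
    have "s < \<beta> k" using sb[of "Suc k"] bS[of k] by simp
    then have "restr (hh s) (length (restr p k)) = restr p k"
      using as[of k] unfolding \<alpha>_def \<beta>_def by (intro key_prefix) auto
    then show ?thesis by simp
  qed
  have "hh s = p"
  proof
    fix i show "hh s i = p i" using r[of "Suc i"] unfolding restr_eq_iff by simp
  qed
  then show ?thesis using s0 s1 by blast
qed



context coding begin

lemma backward:
  assumes H: "Hausdorff_space T" and SB: "sorgenfrey_base T V"
  shows "\<exists>f. continuous_map sorgenfrey T f \<and> open_map sorgenfrey T f \<and>
              f ` topspace sorgenfrey = topspace T"
proof -
  have cov: "covering_scheme (topspace T) V" using SB unfolding sorgenfrey_base_def by blast
  have Vnil: "V [] = topspace T" using cov unfolding covering_scheme_def by blast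
  have Vcov: "\<And>a. V a = (\<Union>n. V (a@[n]))" using cov unfolding covering_scheme_def by blast
  have Vc: "\<And>q. fruit V q \<noteq> {}"
    using SB unfolding sorgenfrey_base_def complete_scheme_def by blast
  have S1: "\<And>x q n. x \<in> topspace T \<Longrightarrow> q \<in> branches V x \<Longrightarrow> \<exists>t\<in>BB V x T. restr t n = restr q n"
    using SB unfolding sorgenfrey_base_def by blast
  have S2: "\<And>q. \<exists>z\<in>topspace T. q \<in> BB V z T"
    using SB unfolding sorgenfrey_base_def by blast
  have fruit_sub: "fruit V p \<subseteq> topspace T" for p
  proof
    fix w assume "w \<in> fruit V p"
    then have "w \<in> V (restr p 0)" unfolding fruit_mem by blast
    then show "w \<in> topspace T" using Vnil by simp
  qed
  have cut_ne: "cut V q m \<noteq> {}" for q m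
  proof -
    define p where "p = q(m := Suc (q m))"
    have "restr q m = restr p m" unfolding restr_eq_iff p_def by simp
    moreover have "q m < p m" unfolding p_def by simp
    ultimately have "p \<in> rsequences q m" unfolding rsequences_def seq_less_def by blast
    then show ?thesis using Vc[of p] unfolding cut_def by blast
  qed
  have cut_anti: "m \<le> m' \<Longrightarrow> cut V q m' \<subseteq> cut V q m" for q m m'
    unfolding cut_def rsequences_def using restr_mono by blast
  have BB_branch: "z \<in> fruit V q" if "q \<in> BB V z T" for q z
    using that unfolding BB_def branches_def by simp
  have BB_base: "open_nbhd_base T z {cut V q m \<union> {z} | m. True}" if "q \<in> BB V z T" for q z
    using that unfolding BB_def by simp
  have BB_nb: "\<exists>m. cut V q m \<union> {z} \<subseteq> U" if "q \<in> BB V z T" "openin T U" "z \<in> U" for q z U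
  proof -
    have "\<exists>B\<in>{cut V q m \<union> {z} | m. True}. B \<subseteq> U"
      using BB_base[OF that(1)] that(2,3) unfolding open_nbhd_base_def by blast
    then show ?thesis by blast
  qed
  have BB_open: "openin T (cut V q m \<union> {z})" if "q \<in> BB V z T" for q z m
  proof -
    have "cut V q m \<union> {z} \<in> {cut V q m \<union> {z} | m. True}" by blast
    then show ?thesis using BB_base[OF that] unfolding open_nbhd_base_def by blast
  qed
  have uniq: "z = z'" if z: "z \<in> topspace T" "z' \<in> topspace T" "q \<in> BB V z T" "q \<in> BB V z' T" for z z' q
  proof (rule ccontr)
    assume "z \<noteq> z'"
    then obtain U U' where U: "openin T U" "openin T U'" "z \<in> U" "z' \<in> U'" "disjnt U U'"
      using H z(1,2) unfolding Hausdorff_space_def by blast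
    obtain m1 where m1: "cut V q m1 \<union> {z} \<subseteq> U" using BB_nb[OF z(3) U(1) U(3)] by blast
    obtain m2 where m2: "cut V q m2 \<union> {z'} \<subseteq> U'" using BB_nb[OF z(4) U(2) U(4)] by blast
    have "cut V q (max m1 m2) \<subseteq> cut V q m1" by (rule cut_anti) simp
    moreover have "cut V q (max m1 m2) \<subseteq> cut V q m2" by (rule cut_anti) simp
    ultimately have "cut V q (max m1 m2) \<subseteq> U \<inter> U'" using m1 m2 by blast
    then show False using U(5) cut_ne[of q "max m1 m2"] unfolding disjnt_def by blast
  qed
  define g where "g q = (SOME z. z \<in> topspace T \<and> q \<in> BB V z T)" for q
  have g: "g q \<in> topspace T \<and> q \<in> BB V (g q) T" for q
    unfolding g_def by (rule someI_ex) (use S2[of q] in blast)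
  have g_eq: "g q = z" if "z \<in> topspace T" "q \<in> BB V z T" for q z
    using uniq[of "g q" z q] g[of q] that by blast
  have has_branch: "\<exists>q. q \<in> branches V x" if x: "x \<in> topspace T" for x
  proof -
    define L where "L = rec_nat [] (\<lambda>k l. l @ [SOME n. x \<in> V (l @ [n])])"
    have L0: "L 0 = []" unfolding L_def by simp
    have LS: "L (Suc k) = L k @ [SOME n. x \<in> V (L k @ [n])]" for k unfolding L_def by simp
    have Lx: "x \<in> V (L k)" for k
    proof (induction k)
      case 0 then show ?case using x Vnil L0 by simp
    next
      case (Suc k)
      then have "\<exists>n. x \<in> V (L k @ [n])" using Vcov[of "L k"] by blast
      then have "x \<in> V (L k @ [SOME n. x \<in> V (L k @ [n])])" by (rule someI_ex)
      then show ?case unfolding LS .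
    qed
    have Llen: "length (L k) = k" for k by (induction k) (simp_all add: L0 LS)
    have Lpre: "take k (L (k + d)) = L k" for k d
    proof (induction d)
      case 0 then show ?case using Llen by simp
    next
      case (Suc d)
      have "L (k + Suc d) = L (k + d) @ [SOME n. x \<in> V (L (k+d) @ [n])]" using LS[of "k+d"] by simp
      then have "take k (L (k + Suc d)) = take k (L (k + d))" using Llen[of "k+d"] by simp
      then show ?case using Suc by simp
    qed
    define q where "q i = L (Suc i) ! i" for i
    have rq: "restr q k = L k" for k
    proof (rule nth_equalityI)
      show "length (restr q k) = length (L k)" using Llen by simp
    next
      fix i assume "i < length (restr q k)"
      then have i: "i < k" by simp
      have "restr q k ! i = L (Suc i) ! i" unfolding restr_def q_def using i by simp
      also have "L (Suc i) = take (Suc i) (L (Suc i + (k - Suc i)))" by (rule Lpre[symmetric])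
      also have "Suc i + (k - Suc i) = k" using i by simp
      finally show "restr q k ! i = L k ! i" by simp
    qed
    have "q \<in> branches V x" unfolding branches_def fruit_mem using Lx rq by simp
    then show ?thesis by blast
  qed
  define f where "f x = g (c x)" for x
  have f_top: "f x \<in> topspace T" for x unfolding f_def using g by blast
  have f_surj: "f ` topspace sorgenfrey = topspace T"
  proof
    show "f ` topspace sorgenfrey \<subseteq> topspace T" using f_top by blast
    show "topspace T \<subseteq> f ` topspace sorgenfrey"
    proof
      fix x assume x: "x \<in> topspace T"
      then obtain q where "q \<in> branches V x" using has_branch by blast
      then obtain t where t: "t \<in> BB V x T" using S1[OF x] by blast
      obtain u where "t = c u" using C1 by (metis surjD)
      then have "f u = x" unfolding f_def using g_eq[OF x t] by simp
      then show "x \<in> f ` topspace sorgenfrey" by auto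
    qed
  qed
  have f_cont: "continuous_map sorgenfrey T f"
    unfolding continuous_map_def
  proof (intro conjI allI impI)
    show "f \<in> topspace sorgenfrey \<rightarrow> topspace T" using f_top by blast
  next
    fix U assume U: "openin T U"
    have "openin sorgenfrey {x. f x \<in> U}"
      unfolding sorg_open_iff
    proof
      fix x assume x: "x \<in> {x. f x \<in> U}"
      have q: "c x \<in> BB V (f x) T" unfolding f_def using g by blast
      obtain m where m: "cut V (c x) m \<union> {f x} \<subseteq> U" using BB_nb[OF q U] x by blast
      obtain e where e: "e>0" "\<forall>y. x < y \<and> y < x+e \<longrightarrow> seq_less (c x) (c y) \<and> restr (c y) m = restr (c x) m"
        using right_nb by blast
      have "{x..<x+e} \<subseteq> {x. f x \<in> U}"
      proof
        fix y assume y: "y \<in> {x..<x+e}"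
        show "y \<in> {x. f x \<in> U}"
        proof (cases "y = x")
          case True then show ?thesis using x by simp
        next
          case False
          then have "x < y \<and> y < x+e" using y by simp
          then have "seq_less (c x) (c y) \<and> restr (c y) m = restr (c x) m" using e(2) by blast
          then have "c y \<in> rsequences (c x) m" unfolding rsequences_def by simp
          moreover have "f y \<in> fruit V (c y)" unfolding f_def using g BB_branch by blast
          ultimately have "f y \<in> cut V (c x) m" unfolding cut_def by blast
          then show ?thesis using m by blast
        qed
      qed
      then show "\<exists>e>0. {x..<x+e} \<subseteq> {x. f x \<in> U}" using e(1) by blast
    qed
    then show "openin sorgenfrey {x \<in> topspace sorgenfrey. f x \<in> U}" by simp
  qed
  have f_open: "open_map sorgenfrey T f"
    unfolding open_map_def
  proof (intro allI impI)
    fix W assume W: "openin sorgenfrey W"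
    show "openin T (f ` W)"
      unfolding openin_subopen[of T "f ` W"]
    proof
      fix z assume "z \<in> f ` W"
      then obtain x where x: "x \<in> W" "z = f x" by blast
      obtain e where e: "e>0" "{x..<x+e} \<subseteq> W" using W x(1) unfolding sorg_open_iff by blast
      obtain m0 where m0: "\<forall>u. restr (c u) m0 = restr (c x) m0 \<longrightarrow> \<bar>u-x\<bar> < e"
        using C3[OF e(1)] by blast
      define m where "m = Suc m0"
      have q: "c x \<in> BB V (f x) T" unfolding f_def using g by blast
      have "cut V (c x) m \<union> {f x} \<subseteq> f ` W"
      proof
        fix w assume w: "w \<in> cut V (c x) m \<union> {f x}"
        show "w \<in> f ` W"
        proof (cases "w = f x")
          case True then show ?thesis using x(1) by blast
        next
          case False
          then obtain p where p: "p \<in> rsequences (c x) m" "w \<in> fruit V p" using w unfolding cut_def by blast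
          then have p1: "seq_less (c x) p" "restr (c x) m = restr p m" unfolding rsequences_def by auto
          then obtain j where j: "m \<le> j" "restr (c x) j = restr p j" "c x j < p j" using less_index by blast
          have wT: "w \<in> topspace T" using p(2) fruit_sub by blast
          have "p \<in> branches V w" using p(2) unfolding branches_def by simp
          then obtain t where t: "t \<in> BB V w T" "restr t (Suc j) = restr p (Suc j)" using S1[OF wT] by blast
          obtain u where u: "t = c u" using C1 by (metis surjD)
          have fu: "f u = w" unfolding f_def using g_eq[OF wT t(1)] u by simp
          have r: "restr (c u) (Suc j) = restr p (Suc j)" using t(2) u by simp
          have sl: "seq_less (c x) (c u)" using less_of_prefix[OF j(2,3) r[symmetric]] .
          have "restr (c u) m = restr p m" by (rule restr_mono[OF r]) (use j(1) in simp)
          then have rm: "restr (c u) m = restr (c x) m" using p1(2) by simp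
          then have "c u 0 = c x 0" unfolding m_def restr_eq_iff by blast
          then have "x < u" using sl ge_of_less by blast
          moreover have "restr (c u) m0 = restr (c x) m0" by (rule restr_mono[OF rm]) (simp add: m_def)
          then have "\<bar>u-x\<bar> < e" using m0 by blast
          ultimately have "u \<in> W" using e(2) by auto
          then show ?thesis using fu by blast
        qed
      qed
      moreover have "openin T (cut V (c x) m \<union> {f x})" using BB_open[OF q] .
      ultimately show "\<exists>T'. openin T T' \<and> z \<in> T' \<and> T' \<subseteq> f ` W" using x(2) by blast
    qed
  qed
  show ?thesis using f_cont f_open f_surj by blast
qed

end



definition cc :: "real \<Rightarrow> nat \<Rightarrow> nat" where
  "cc x k = (case k of 0 \<Rightarrow> int_encode \<lfloor>x\<rfloor> | Suc j \<Rightarrow> hh (frac x) j)"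

lemma cc_0: "cc x 0 = int_encode \<lfloor>x\<rfloor>" unfolding cc_def by simp
lemma cc_shift: "(\<lambda>k. cc x (Suc k)) = hh (frac x)" unfolding cc_def by simp
lemma restr_cc: "restr (cc x) (Suc m) = int_encode \<lfloor>x\<rfloor> # restr (hh (frac x)) m"
  using restr_Suc0[of "cc x" m] unfolding cc_shift cc_0 .

lemma frac_range: "0 \<le> frac x \<and> frac x < 1" by (simp add: frac_lt_1)

interpretation cod: coding cc
proof
  show "surj cc"
  proof (rule surjI[of _ "\<lambda>p. of_int (int_decode (p 0)) + (SOME s. 0 \<le> s \<and> s < 1 \<and> hh s = (\<lambda>k. p (Suc k)))"])
    fix p :: "nat \<Rightarrow> nat"
    define s where "s = (SOME s. 0 \<le> s \<and> s < 1 \<and> hh s = (\<lambda>k. p (Suc k)))"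
    have s: "0 \<le> s \<and> s < 1 \<and> hh s = (\<lambda>k. p (Suc k))"
      unfolding s_def by (rule someI_ex) (rule hh_surj)
    define x where "x = of_int (int_decode (p 0)) + s"
    have fl: "\<lfloor>x\<rfloor> = int_decode (p 0)" unfolding x_def using s by (simp add: floor_eq_iff)
    have fr: "frac x = s" unfolding frac_def fl unfolding x_def by simp
    have "cc x = p"
    proof
      fix k show "cc x k = p k"
      proof (cases k)
        case 0 then show ?thesis by (simp add: cc_0 fl)
      next
        case (Suc j)
        then show ?thesis unfolding cc_def fr using s by simp
      qed
    qed
    then show "cc (of_int (int_decode (p 0)) + (SOME s. 0 \<le> s \<and> s < 1 \<and> hh s = (\<lambda>k. p (Suc k)))) = p"
      unfolding x_def s_def .
  qed
next
  fix x :: real and m :: nat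
  obtain e' where e': "e' > 0" "\<forall>s'. frac x \<le> s' \<and> s' < frac x + e' \<longrightarrow> restr (hh s') m = restr (hh (frac x)) m"
    using hh_right[of "frac x" m] frac_range by blast
  define e where "e = min e' (1 - frac x)"
  have e0: "e > 0" unfolding e_def using e'(1) frac_range[of x] by simp
  show "\<exists>e>0. \<forall>y. x \<le> y \<and> y < x+e \<longrightarrow> restr (cc y) m = restr (cc x) m"
  proof (intro exI[of _ e] conjI allI impI)
    show "e > 0" by (rule e0)
    fix y assume y: "x \<le> y \<and> y < x + e"
    have ee: "e \<le> e'" "e \<le> 1 - frac x" unfolding e_def by simp_all
    have "of_int \<lfloor>x\<rfloor> \<le> y" using y of_int_floor_le[of x] by linarith
    moreover have "y < of_int \<lfloor>x\<rfloor> + 1" using y ee unfolding frac_def by linarith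
    ultimately have fl: "\<lfloor>y\<rfloor> = \<lfloor>x\<rfloor>" by (simp add: floor_eq_iff)
    have fy: "frac y = frac x + (y - x)" unfolding frac_def fl by simp
    have "frac x \<le> frac y \<and> frac y < frac x + e'" using fy y ee by linarith
    then have "restr (hh (frac y)) m = restr (hh (frac x)) m" using e'(2) by blast
    then have "restr (cc y) (Suc m) = restr (cc x) (Suc m)" unfolding restr_cc fl by simp
    then show "restr (cc y) m = restr (cc x) m" by (rule restr_mono) simp
  qed
next
  fix x e :: real assume e: "e > 0"
  obtain k where k: "1/e < 2^k" using real_arch_pow[of 2 "1/e"] by auto
  have k2: "1 < e * 2^k" using k e by (simp add: divide_less_eq mult.commute)
  show "\<exists>m. \<forall>u. restr (cc u) m = restr (cc x) m \<longrightarrow> \<bar>u-x\<bar> < e"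
  proof (intro exI[of _ "Suc k"] allI impI)
    fix u assume "restr (cc u) (Suc k) = restr (cc x) (Suc k)"
    then have a: "int_encode \<lfloor>u\<rfloor> = int_encode \<lfloor>x\<rfloor>" "restr (hh (frac u)) k = restr (hh (frac x)) k"
      unfolding restr_cc by simp_all
    have fl: "\<lfloor>u\<rfloor> = \<lfloor>x\<rfloor>" using arg_cong[OF a(1), of int_decode] by simp
    have "\<bar>frac u - frac x\<bar> * 2^k < 1" using shrink[OF _ _ _ _ a(2)] frac_range by blast
    moreover have "u - x = frac u - frac x" unfolding frac_def fl by simp
    ultimately have "\<bar>u - x\<bar> * 2^k < 1" by simp
    then have "\<bar>u - x\<bar> * 2^k < e * 2^k" using k2 by linarith
    then show "\<bar>u-x\<bar> < e" by (rule mult_right_less_imp_less) simp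
  qed
next
  fix x y :: real assume xy: "x < y" "cc x 0 = cc y 0"
  have "int_encode \<lfloor>x\<rfloor> = int_encode \<lfloor>y\<rfloor>" using xy(2) unfolding cc_0 .
  then have fl: "\<lfloor>x\<rfloor> = \<lfloor>y\<rfloor>" by (rule injD[OF inj_int_encode])
  have "frac x < frac y" using xy(1) unfolding frac_def fl by simp
  then have "seq_less (hh (frac x)) (hh (frac y))" using hh_less frac_range by blast
  then obtain n where n: "\<forall>i<n. hh (frac x) i = hh (frac y) i" "hh (frac x) n < hh (frac y) n"
    unfolding seq_less_iff by blast
  have "\<forall>i<Suc n. cc x i = cc y i"
  proof (intro allI impI)
    fix i assume "i < Suc n"
    then show "cc x i = cc y i" using n(1) xy(2) by (cases i) (simp_all add: cc_def)
  qed
  moreover have "cc x (Suc n) < cc y (Suc n)" using n(2) by (simp add: cc_def)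
  ultimately show "seq_less (cc x) (cc y)" unfolding seq_less_iff by blast
qed

theorem theorem1:
  fixes T :: "'a topology"
  assumes "Hausdorff_space T"
  shows "(\<exists>f. continuous_map sorgenfrey T f \<and> open_map sorgenfrey T f \<and>
              f ` topspace sorgenfrey = topspace T)
         \<longleftrightarrow> (\<exists>V. sorgenfrey_base T V)"
proof
  assume "\<exists>f. continuous_map sorgenfrey T f \<and> open_map sorgenfrey T f \<and>
              f ` topspace sorgenfrey = topspace T"
  then obtain f where "continuous_map sorgenfrey T f" "open_map sorgenfrey T f"
    "f ` topspace sorgenfrey = topspace T" by blast
  then show "\<exists>V. sorgenfrey_base T V" by (rule cod.forward)
next
  assume "\<exists>V. sorgenfrey_base T V"
  then obtain V where "sorgenfrey_base T V" by blast
  then show "\<exists>f. continuous_map sorgenfrey T f \<and> open_map sorgenfrey T f \<and>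
              f ` topspace sorgenfrey = topspace T" by (rule cod.backward[OF assms])
qed


end
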